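(* (1) $S^{N-1}_{\mathbb C,\times}$ is left and right half-classical, and it is maximal with this property: every closed subspace $X\subset S^{N-1}_{\mathbb C,+}$ which is both left and right half-classical satisfies $X\subset S^{N-1}_{\mathbb C,\times}$. (2) $S^{N-1}_{\mathbb C,**}$ is fully half-classical. (3) $S^{N-1}_{\mathbb R,*}$ is fully half-classical, and every closed subspace $X\subset S^{N-1}_{\mathbb R,+}$ which is fully half-classical satisfies $X\subset S^{N-1}_{\mathbb R,*}$.
   Context: $C(S^{N-1}_{\mathbb C,+})$ is the universal unital C*-algebra generated by $x_1,\dots,x_N$ with $\sum_ix_ix_i^*=\sum_ix_i^*x_i=1$; $S^{N-1}_{\mathbb R,+}$ adds $x_i=x_i^*$. $S^{N-1}_{\mathbb C,\times}$: impose $ab^*c=cb^*a$ for all $a,b,c\in\{x_i\}$; $S^{N-1}_{\mathbb C,**}$: impose $abc=cba$ for all $a,b,c\in\{x_i,x_i^*\}$; $S^{N-1}_{\mathbb R,*}$: impose on $S^{N-1}_{\mathbb R,+}$ the relations $abc=cba$ for $a,b,c\in\{x_i\}$. Closed subspaces $X\subset S^{N-1}_{\mathbb C,+}$ are quotients $C(X)$ of $C(S^{N-1}_{\mathbb C,+})$. For such $X$: the left projective version $PX$ has $C(PX)$ = C*-subalgebra of $C(X)$ generated by $p_{ij}=x_ix_j^*$; the right projective version $P'X$ is generated by $q_{ij}=x_j^*x_i$; the full projective version $\mathcal PX$ is generated by all $p_{ij},q_{ij}$. $X$ is left/right/fully half-classical when $C(PX)$, $C(P'X)$, $C(\mathcal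 PX)$ respectively is commutative. *)

theory Defs
  imports "HOL-Analysis.Analysis"
begin

text \<open>The carrier is a type of class
  real_normed_algebra_1 and banach (unital real Banach algebra with norm 1 = 1);
  we add a complex scalar multiplication extending the real one and an
  involution satisfying the C*-identity.\<close>

locale cstar_algebra =
  fixes cscale :: "complex \<Rightarrow> 'a::{real_normed_algebra_1,banach} \<Rightarrow> 'a"
    and star :: "'a \<Rightarrow> 'a"
  assumes cscale_of_real: "\<And>r a. cscale (complex_of_real r) a = r *\<^sub>R a"
    and cscale_add_left: "\<And>c d a. cscale (c + d) a = cscale c a + cscale d a"
    and cscale_add_right: "\<And>c a b. cscale c (a + b) = cscale c a + cscale c b"
    and cscale_mult: "\<And>c d a. cscale (c * d) a = cscale c (cscale d a)"
    and cscale_one: "\<And>a. cscale 1 a = a"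
    and cscale_left: "\<And>c a b. cscale c (a * b) = cscale c a * b"
    and cscale_right: "\<And>c a b. cscale c (a * b) = a * cscale c b"
    and norm_cscale: "\<And>c a. norm (cscale c a) = cmod c * norm a"
    and star_star: "\<And>a. star (star a) = a"
    and star_add: "\<And>a b. star (a + b) = star a + star b"
    and star_cscale: "\<And>c a. star (cscale c a) = cscale (cnj c) (star a)"
    and star_mult: "\<And>a b. star (a * b) = star b * star a"
    and cstar_identity: "\<And>a. norm (star a * a) = (norm a)\<^sup>2"

definition cstar_subalg :: "(complex \<Rightarrow> 'a \<Rightarrow> 'a) \<Rightarrow> ('a \<Rightarrow> 'a) \<Rightarrow> 'a::{real_normed_algebra_1,banach} set \<Rightarrow> 'a set" where
  "cstar_subalg cscale star S =
     \<Inter>{B. S \<subseteq> B \<and> closed B \<and>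
            (\<forall>a\<in>B. \<forall>b\<in>B. a + b \<in> B \<and> a * b \<in> B) \<and>
            (\<forall>c. \<forall>a\<in>B. cscale c a \<in> B) \<and>
            (\<forall>a\<in>B. star a \<in> B)}"

definition commutative_set :: "'a::times set \<Rightarrow> bool" where
  "commutative_set B \<longleftrightarrow> (\<forall>a\<in>B. \<forall>b\<in>B. a * b = b * a)"

text \<open>Generators x_1,...,x_N (indices {1..N}) of C(X) for a closed subspace
  X of the free complex sphere: the algebra is generated by the x_i, and
  sum x_i x_i^* = sum x_i^* x_i = 1.\<close>

definition free_sphere_gens ::
  "(complex \<Rightarrow> 'a \<Rightarrow> 'a) \<Rightarrow> ('a \<Rightarrow> 'a) \<Rightarrow> nat \<Rightarrow> (nat \<Rightarrow> 'a::{real_normed_algebra_1,banach}) \<Rightarrow> bool" where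
  "free_sphere_gens cscale star N x \<longleftrightarrow>
     cstar_subalg cscale star (insert 1 (x ` {1..N})) = UNIV \<and>
     (\<Sum>i\<in>{1..N}. x i * star (x i)) = 1 \<and>
     (\<Sum>i\<in>{1..N}. star (x i) * x i) = 1"

text \<open>Real case: additionally x_i = x_i^*.\<close>
definition self_adjoint_gens :: "('a \<Rightarrow> 'a) \<Rightarrow> nat \<Rightarrow> (nat \<Rightarrow> 'a) \<Rightarrow> bool" where
  "self_adjoint_gens star N x \<longleftrightarrow> (\<forall>i\<in>{1..N}. star (x i) = x i)"

text \<open>Relations defining the subspaces S_{C,x}, S_{C,**}, S_{R,*}.\<close>
definition rel_times :: "('a \<Rightarrow> 'a) \<Rightarrow> nat \<Rightarrow> (nat \<Rightarrow> 'a::times) \<Rightarrow> bool" where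
  "rel_times star N x \<longleftrightarrow>
     (\<forall>a\<in>x ` {1..N}. \<forall>b\<in>x ` {1..N}. \<forall>c\<in>x ` {1..N}. a * star b * c = c * star b * a)"

definition rel_starstar :: "('a \<Rightarrow> 'a) \<Rightarrow> nat \<Rightarrow> (nat \<Rightarrow> 'a::times) \<Rightarrow> bool" where
  "rel_starstar star N x \<longleftrightarrow>
     (let G = x ` {1..N} \<union> star ` x ` {1..N} in
      \<forall>a\<in>G. \<forall>b\<in>G. \<forall>c\<in>G. a * b * c = c * b * a)"

definition rel_realstar :: "nat \<Rightarrow> (nat \<Rightarrow> 'a::times) \<Rightarrow> bool" where
  "rel_realstar N x \<longleftrightarrow>
     (\<forall>a\<in>x ` {1..N}. \<forall>b\<in>x ` {1..N}. \<forall>c\<in>x ` {1..N}. a * b * c = c * b * a)"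

definition left_proj :: "(complex \<Rightarrow> 'a \<Rightarrow> 'a) \<Rightarrow> ('a \<Rightarrow> 'a) \<Rightarrow> nat \<Rightarrow> (nat \<Rightarrow> 'a::{real_normed_algebra_1,banach}) \<Rightarrow> 'a set" where
  "left_proj cscale star N x = cstar_subalg cscale star {x i * star (x j) | i j. i \<in> {1..N} \<and> j \<in> {1..N}}"

definition right_proj :: "(complex \<Rightarrow> 'a \<Rightarrow> 'a) \<Rightarrow> ('a \<Rightarrow> 'a) \<Rightarrow> nat \<Rightarrow> (nat \<Rightarrow> 'a::{real_normed_algebra_1,banach}) \<Rightarrow> 'a set" where
  "right_proj cscale star N x = cstar_subalg cscale star {star (x j) * x i | i j. i \<in> {1..N} \<and> j \<in> {1..N}}"

definition full_proj :: "(complex \<Rightarrow> 'a \<Rightarrow> 'a) \<Rightarrow> ('a \<Rightarrow> 'a) \<Rightarrow> nat \<Rightarrow> (nat \<Rightarrow> 'a::{real_normed_algebra_1,banach}) \<Rightarrow> 'a set" where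
  "full_proj cscale star N x = cstar_subalg cscale star
     ({x i * star (x j) | i j. i \<in> {1..N} \<and> j \<in> {1..N}} \<union>
      {star (x j) * x i | i j. i \<in> {1..N} \<and> j \<in> {1..N}})"

definition left_half_classical where
  "left_half_classical cscale star N x \<longleftrightarrow> commutative_set (left_proj cscale star N x)"
definition right_half_classical where
  "right_half_classical cscale star N x \<longleftrightarrow> commutative_set (right_proj cscale star N x)"
definition fully_half_classical where
  "fully_half_classical cscale star N x \<longleftrightarrow> commutative_set (full_proj cscale star N x)"

end

theory Submission
  imports Defs
begin

lemma subalg_sup: "S \<subseteq> cstar_subalg cs st S"
  unfolding cstar_subalg_def by blast

lemma subalg_min:
  assumes "S \<subseteq> B" "closed B" "\<forall>a\<in>B. \<forall>b\<in>B. a + b \<in> B \<and> a * b \<in> B"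
    "\<forall>c. \<forall>a\<in>B. cs c a \<in> B" "\<forall>a\<in>B. st a \<in> B"
  shows "cstar_subalg cs st S \<subseteq> B"
  unfolding cstar_subalg_def using assms by (intro Inter_lower) blast

lemma subalg_star: "a \<in> cstar_subalg cs st S \<Longrightarrow> st a \<in> cstar_subalg cs st S"
  unfolding cstar_subalg_def by blast

lemma commutant_closed:
  fixes T :: "'a::{real_normed_algebra_1,banach} set"
  shows "closed {a. \<forall>t\<in>T. a * t = t * a}"
proof -
  have "{a. \<forall>t\<in>T. a * t = t * a} = (\<Inter>t\<in>T. {a. a * t = t * a})" by blast
  moreover have "closed {a::'a. a * t = t * a}" for t
    by (intro closed_Collect_eq continuous_intros)
  ultimately show ?thesis by auto
qed

lemma commutant_props:
  assumes A: "cstar_algebra cs st" and T: "\<forall>t\<in>T. st t \<in> T"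
  defines "C \<equiv> {a. \<forall>t\<in>T. a * t = t * a}"
  shows "closed C" "\<forall>a\<in>C. \<forall>b\<in>C. a + b \<in> C \<and> a * b \<in> C"
    "\<forall>c. \<forall>a\<in>C. cs c a \<in> C" "\<forall>a\<in>C. st a \<in> C"
proof -
  interpret cstar_algebra cs st by (rule A)
  show "closed C" unfolding C_def by (rule commutant_closed)
  show "\<forall>a\<in>C. \<forall>b\<in>C. a + b \<in> C \<and> a * b \<in> C"
    unfolding C_def by (auto simp: distrib_left distrib_right mult.assoc) (metis mult.assoc)
  show "\<forall>c. \<forall>a\<in>C. cs c a \<in> C"
    unfolding C_def by (auto simp: cscale_left[symmetric] cscale_right[symmetric])
  show "\<forall>a\<in>C. st a \<in> C"
  proof (unfold C_def, safe)
    fix a t assume a: "\<forall>t\<in>T. a * t = t * a" and t: "t \<in> T"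
    have "st t \<in> T" using T t by blast
    then have "a * st t = st t * a" using a by blast
    then have "st (a * st t) = st (st t * a)" by simp
    then show "st a * t = t * st a" by (simp add: star_mult star_star)
  qed
qed

lemma comm_gen:
  assumes A: "cstar_algebra cs st" and S: "\<forall>a\<in>S. \<forall>b\<in>S. a * b = b * a"
    and SS: "\<forall>a\<in>S. st a \<in> S"
  shows "commutative_set (cstar_subalg cs st S)"
proof -
  let ?G = "cstar_subalg cs st S"
  have "?G \<subseteq> {a. \<forall>t\<in>S. a * t = t * a}"
    using commutant_props[OF A SS] S by (intro subalg_min) auto
  then have S2: "S \<subseteq> {a. \<forall>t\<in>?G. a * t = t * a}" by auto
  have SG: "\<forall>t\<in>?G. st t \<in> ?G" using subalg_star by blast
  have "?G \<subseteq> {a. \<forall>t\<in>?G. a * t = t * a}"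
    using commutant_props[OF A SG] S2 by (intro subalg_min) auto
  then show ?thesis unfolding commutative_set_def by blast
qed

lemma gens_to_rel:
  fixes x :: "nat \<Rightarrow> 'a::{real_normed_algebra_1,banach}"
  assumes A: "cstar_algebra cs st"
    and s1: "(\<Sum>m\<in>{1..N}. x m * st (x m)) = 1"
    and s2: "(\<Sum>m\<in>{1..N}. st (x m) * x m) = 1"
    and P: "\<And>i j k l. i \<in> {1..N} \<Longrightarrow> j \<in> {1..N} \<Longrightarrow> k \<in> {1..N} \<Longrightarrow> l \<in> {1..N} \<Longrightarrow>
             (x i * st (x j)) * (x k * st (x l)) = (x k * st (x l)) * (x i * st (x j))"
    and Q: "\<And>i j k l. i \<in> {1..N} \<Longrightarrow> j \<in> {1..N} \<Longrightarrow> k \<in> {1..N} \<Longrightarrow> l \<in> {1..N} \<Longrightarrow>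
             (st (x j) * x i) * (st (x l) * x k) = (st (x l) * x k) * (st (x j) * x i)"
    and h: "i \<in> {1..N}" "j \<in> {1..N}" "k \<in> {1..N}"
  shows "x i * st (x j) * x k = x k * st (x j) * x i"
proof -
  have "x i * st (x j) * x k = x i * st (x j) * x k * (\<Sum>m\<in>{1..N}. st (x m) * x m)"
    using s2 by simp
  also have "\<dots> = (\<Sum>m\<in>{1..N}. (x i * st (x j)) * (x k * st (x m)) * x m)"
    by (simp add: sum_distrib_left mult.assoc)
  also have "\<dots> = (\<Sum>m\<in>{1..N}. x k * (st (x j) * x m) * (st (x m) * x i))"
  proof (rule sum.cong[OF refl])
    fix m assume m: "m \<in> {1..N}"
    have "(x i * st (x j)) * (x k * st (x m)) * x m = x k * (st (x m) * x i) * (st (x j) * x m)"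
      using P[OF h(1,2,3) m] by (simp add: mult.assoc)
    also have "\<dots> = x k * (st (x j) * x m) * (st (x m) * x i)"
      using Q[OF h(1) m m h(2)] by (simp add: mult.assoc)
    finally show "(x i * st (x j)) * (x k * st (x m)) * x m = x k * (st (x j) * x m) * (st (x m) * x i)" .
  qed
  also have "\<dots> = x k * st (x j) * (\<Sum>m\<in>{1..N}. x m * st (x m)) * x i"
    by (simp add: sum_distrib_left sum_distrib_right mult.assoc)
  also have "\<dots> = x k * st (x j) * x i" using s1 by simp
  finally show ?thesis .
qed

lemma four_comm:
  fixes G :: "'a::semigroup_mult set"
  assumes R: "\<forall>a\<in>G. \<forall>b\<in>G. \<forall>c\<in>G. a * b * c = c * b * a"
    and h: "a \<in> G" "b \<in> G" "c \<in> G" "d \<in> G"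
  shows "(a * b) * (c * d) = (c * d) * (a * b)"
proof -
  have e1: "a * b * c = c * b * a" using R h by blast
  have e2: "b * a * d = d * a * b" using R h by blast
  have "(a * b) * (c * d) = (a * b * c) * d" by (simp add: mult.assoc)
  also have "\<dots> = c * (b * a * d)" unfolding e1 by (simp add: mult.assoc)
  also have "\<dots> = c * (d * a * b)" unfolding e2 ..
  finally show ?thesis by (simp add: mult.assoc)
qed

theorem proposition3p5:
  fixes cscale :: "complex \<Rightarrow> 'a::{real_normed_algebra_1,banach} \<Rightarrow> 'a"
    and star :: "'a \<Rightarrow> 'a" and N :: nat
  assumes "cstar_algebra cscale star"
  shows
    "(\<forall>x. free_sphere_gens cscale star N x \<and> rel_times star N x \<longrightarrow>
          left_half_classical cscale star N x \<and> right_half_classical cscale star N x) \<and>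
     (\<forall>x. free_sphere_gens cscale star N x \<and>
          left_half_classical cscale star N x \<and> right_half_classical cscale star N x \<longrightarrow>
          rel_times star N x) \<and>
     (\<forall>x. free_sphere_gens cscale star N x \<and> rel_starstar star N x \<longrightarrow>
          fully_half_classical cscale star N x) \<and>
     (\<forall>x. free_sphere_gens cscale star N x \<and> self_adjoint_gens star N x \<and> rel_realstar N x \<longrightarrow>
          fully_half_classical cscale star N x) \<and>
     (\<forall>x. free_sphere_gens cscale star N x \<and> self_adjoint_gens star N x \<and>
          fully_half_classical cscale star N x \<longrightarrow> rel_realstar N x)"
proof -
  interpret cstar_algebra cscale star by (rule assms)
  note A = assms
  have P1: "left_half_classical cscale star N x \<and> right_half_classical cscale star N x"
    if R: "rel_times star N x" for x
  proof -
    have r: "x i * star (x j) * x k = x k * star (x j) * x i"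
      if "i \<in> {1..N}" "j \<in> {1..N}" "k \<in> {1..N}" for i j k
      using R that unfolding rel_times_def by blast
    have rs: "star (x k) * x j * star (x i) = star (x i) * x j * star (x k)"
      if "i \<in> {1..N}" "j \<in> {1..N}" "k \<in> {1..N}" for i j k
    proof -
      have "star (x i * star (x j) * x k) = star (x k * star (x j) * x i)"
        using r[OF that] by simp
      then show ?thesis by (simp add: star_mult star_star mult.assoc)
    qed
    have L: "left_half_classical cscale star N x"
      unfolding left_half_classical_def left_proj_def
    proof (rule comm_gen[OF A])
      show "\<forall>a\<in>{x i * star (x j) | i j. i \<in> {1..N} \<and> j \<in> {1..N}}. star a \<in> {x i * star (x j) | i j. i \<in> {1..N} \<and> j \<in> {1..N}}"
        by (auto simp: star_mult star_star) blast
      show "\<forall>a\<in>{x i * star (x j) | i j. i \<in> {1..N} \<and> j \<in> {1..N}}. \<forall>b\<in>{x i * star (x j) | i j. i \<in> {1..N} \<and> j \<in> {1..N}}. a * b = b * a"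
      proof (safe)
        fix i j k l :: nat assume h: "i \<in> {1..N}" "j \<in> {1..N}" "k \<in> {1..N}" "l \<in> {1..N}"
        have "x i * star (x j) * (x k * star (x l)) = (x i * star (x j) * x k) * star (x l)"
          by (simp add: mult.assoc)
        also have "\<dots> = x k * (star (x j) * x i * star (x l))" using r[of i j k] h by (simp add: mult.assoc)
        also have "\<dots> = x k * (star (x l) * x i * star (x j))" using rs[of l i j] h by simp
        finally show "x i * star (x j) * (x k * star (x l)) = x k * star (x l) * (x i * star (x j))"
          by (simp add: mult.assoc)
      qed
    qed
    have Rt: "right_half_classical cscale star N x"
      unfolding right_half_classical_def right_proj_def
    proof (rule comm_gen[OF A])
      show "\<forall>a\<in>{star (x j) * x i | i j. i \<in> {1..N} \<and> j \<in> {1..N}}. star a \<in> {star (x j) * x i | i j. i \<in> {1..N} \<and> j \<in> {1..N}}"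
        by (auto simp: star_mult star_star) blast
      show "\<forall>a\<in>{star (x j) * x i | i j. i \<in> {1..N} \<and> j \<in> {1..N}}. \<forall>b\<in>{star (x j) * x i | i j. i \<in> {1..N} \<and> j \<in> {1..N}}. a * b = b * a"
      proof (safe)
        fix i j k l :: nat assume h: "i \<in> {1..N}" "j \<in> {1..N}" "k \<in> {1..N}" "l \<in> {1..N}"
        have "star (x j) * x i * (star (x l) * x k) = star (x j) * (x i * star (x l) * x k)"
          by (simp add: mult.assoc)
        also have "\<dots> = star (x j) * (x k * star (x l) * x i)" using r[of i l k] h by simp
        also have "\<dots> = (star (x j) * x k * star (x l)) * x i" by (simp add: mult.assoc)
        also have "\<dots> = (star (x l) * x k * star (x j)) * x i" using rs[of l k j] h by simp
        finally show "star (x j) * x i * (star (x l) * x k) = star (x l) * x k * (star (x j) * x i)"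
          by (simp add: mult.assoc)
      qed
    qed
    show ?thesis using L Rt by blast
  qed
  have P2: "rel_times star N x"
    if F: "free_sphere_gens cscale star N x" and L: "left_half_classical cscale star N x"
      and Rt: "right_half_classical cscale star N x" for x
  proof -
    have Lc: "commutative_set (left_proj cscale star N x)" using L unfolding left_half_classical_def .
    have Rc: "commutative_set (right_proj cscale star N x)" using Rt unfolding right_half_classical_def .
    have pm: "x i * star (x j) \<in> left_proj cscale star N x" if "i \<in> {1..N}" "j \<in> {1..N}" for i j
      unfolding left_proj_def using that by (intro subsetD[OF subalg_sup]) blast
    have qm: "star (x j) * x i \<in> right_proj cscale star N x" if "i \<in> {1..N}" "j \<in> {1..N}" for i j
      unfolding right_proj_def using that by (intro subsetD[OF subalg_sup]) blast
    show ?thesis unfolding rel_times_def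
    proof (safe)
      fix i j k assume h: "i \<in> {1..N}" "j \<in> {1..N}" "k \<in> {1..N}"
      show "x i * star (x j) * x k = x k * star (x j) * x i"
        apply (rule gens_to_rel[OF A _ _ _ _ h])
        using F unfolding free_sphere_gens_def apply blast
        using F unfolding free_sphere_gens_def apply blast
        using Lc pm unfolding commutative_set_def apply blast
        using Rc qm unfolding commutative_set_def apply blast
        done
    qed
  qed
  have P3: "fully_half_classical cscale star N x" if R: "rel_starstar star N x" for x
  proof -
    define G where "G = x ` {1..N} \<union> star ` x ` {1..N}"
    have RG: "\<forall>a\<in>G. \<forall>b\<in>G. \<forall>c\<in>G. a * b * c = c * b * a"
      using R unfolding rel_starstar_def G_def Let_def by blast
    let ?S = "{x i * star (x j) | i j. i \<in> {1..N} \<and> j \<in> {1..N}} \<union>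
      {star (x j) * x i | i j. i \<in> {1..N} \<and> j \<in> {1..N}}"
    have SG: "?S \<subseteq> {a * b | a b. a \<in> G \<and> b \<in> G}" unfolding G_def by blast
    show ?thesis unfolding fully_half_classical_def full_proj_def
    proof (rule comm_gen[OF A])
      show "\<forall>a\<in>?S. star a \<in> ?S"
      proof
        fix a assume "a \<in> ?S"
        then show "star a \<in> ?S"
        proof
          assume "a \<in> {x i * star (x j) | i j. i \<in> {1..N} \<and> j \<in> {1..N}}"
          then obtain i j where ij: "a = x i * star (x j)" "i \<in> {1..N}" "j \<in> {1..N}" by blast
          then have "star a = x j * star (x i)" by (simp add: star_mult star_star)
          then show ?thesis using ij by blast
        next
          assume "a \<in> {star (x j) * x i | i j. i \<in> {1..N} \<and> j \<in> {1..N}}"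
          then obtain i j where ij: "a = star (x j) * x i" "i \<in> {1..N}" "j \<in> {1..N}" by blast
          then have "star a = star (x i) * x j" by (simp add: star_mult star_star)
          then show ?thesis using ij by blast
        qed
      qed
      show "\<forall>a\<in>?S. \<forall>b\<in>?S. a * b = b * a"
      proof (intro ballI)
        fix a b assume ha: "a \<in> ?S" and hb: "b \<in> ?S"
        have "a \<in> {a * b | a b. a \<in> G \<and> b \<in> G}" using subsetD[OF SG ha] .
        moreover have "b \<in> {a * b | a b. a \<in> G \<and> b \<in> G}" using subsetD[OF SG hb] .
        ultimately
        obtain a1 a2 b1 b2 where "a = a1 * a2" "b = b1 * b2" "a1 \<in> G" "a2 \<in> G" "b1 \<in> G" "b2 \<in> G"
          by (auto simp only: mem_Collect_eq)
        then show "a * b = b * a" using four_comm[OF RG] by simp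
      qed
    qed
  qed
  have P4: "fully_half_classical cscale star N x"
    if SA: "self_adjoint_gens star N x" and R: "rel_realstar N x" for x
  proof -
    have e: "star ` x ` {1..N} = x ` {1..N}"
      unfolding image_image using SA unfolding self_adjoint_gens_def by (intro image_cong) auto
    have "rel_starstar star N x" using R unfolding rel_starstar_def rel_realstar_def Let_def e by simp
    then show ?thesis by (rule P3)
  qed
  have P5: "rel_realstar N x"
    if F: "free_sphere_gens cscale star N x" and SA: "self_adjoint_gens star N x"
      and Fc0: "fully_half_classical cscale star N x" for x
  proof -
    have Fc: "commutative_set (full_proj cscale star N x)" using Fc0 unfolding fully_half_classical_def .
    have pm: "x i * star (x j) \<in> full_proj cscale star N x" if "i \<in> {1..N}" "j \<in> {1..N}" for i j
      unfolding full_proj_def using that by (intro subsetD[OF subalg_sup]) blast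
    have qm: "star (x j) * x i \<in> full_proj cscale star N x" if "i \<in> {1..N}" "j \<in> {1..N}" for i j
      unfolding full_proj_def using that by (intro subsetD[OF subalg_sup]) blast
    show ?thesis unfolding rel_realstar_def
    proof (safe)
      fix i j k assume h: "i \<in> {1..N}" "j \<in> {1..N}" "k \<in> {1..N}"
      have "x i * star (x j) * x k = x k * star (x j) * x i"
        apply (rule gens_to_rel[OF A _ _ _ _ h])
        using F unfolding free_sphere_gens_def apply blast
        using F unfolding free_sphere_gens_def apply blast
        using Fc pm unfolding commutative_set_def apply blast
        using Fc qm unfolding commutative_set_def apply blast
        done
      moreover have "star (x j) = x j" using SA h unfolding self_adjoint_gens_def by blast
      ultimately show "x i * x j * x k = x k * x j * x i" by simp
    qed
  qed
  show ?thesis using P1 P2 P3 P4 P5 by blast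
qed

end
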